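(* Suppose that $E_1,\dotsc,E_\ell\in\mathcal{P}$ have pairwise disjoint interiors and that any intersection $E_r\cap E_s$ with affine dimension $d-1$ is a common face of $E_r$ and $E_s$. If $P:=\bigcup_{s=1}^\ell E_s\in\mathcal{P}$, then $E_1,\dotsc,E_\ell$ constitutes a polyhedral subdivision of $P$.
   Context: $\mathcal{P}$ is the collection of polyhedral subsets of $\mathbb{R}^d$ (finite intersections of closed half-spaces, with $\mathbb{R}^d$ included) with non-empty interior. A face $F$ of a convex set $E$ is a convex subset such that whenever $u,v\in E$ and $tu+(1-t)v\in F$ for some $t\in(0,1)$, we have $u,v\in F$. A polyhedral subdivision of $P\in\mathcal{P}$ is a finite collection $E_1,\dots,E_\ell\in\mathcal{P}$ with $P=\bigcup_jE_j$ such that $E_i\cap E_j$ is a common face of $E_i$ and $E_j$ for all $i,j$. *)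

theory Defs
  imports "HOL-Analysis.Analysis"
begin

text \<open>The class \<open>\<P>\<close>: polyhedral subsets (finite intersections of closed half-spaces,
  the whole space included) with non-empty interior.\<close>
definition polyhedral_set :: "'a::euclidean_space set \<Rightarrow> bool" where
  "polyhedral_set E \<longleftrightarrow> polyhedron E \<and> interior E \<noteq> {}"

definition polyhedral_subdivision :: "'a::euclidean_space set \<Rightarrow> nat \<Rightarrow> (nat \<Rightarrow> 'a set) \<Rightarrow> bool" where
  "polyhedral_subdivision P l E \<longleftrightarrow>
     polyhedral_set P \<and>
     (\<forall>i<l. polyhedral_set (E i)) \<and>
     P = (\<Union>i<l. E i) \<and>
     (\<forall>i<l. \<forall>j<l. (E i \<inter> E j) face_of (E i) \<and> (E i \<inter> E j) face_of (E j))"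

end

theory Submission
  imports Defs
begin

lemma negl_lowdim_aff:
  fixes S :: "'a::euclidean_space set"
  assumes "aff_dim S < int DIM('a)"
  shows "negligible (affine hull S)"
proof -
  have "interior (affine hull S) = {}"
    using assms by (intro low_dim_interior) simp
  then show ?thesis
    using negligible_convex_interior[of "affine hull S"] by (simp add: convex_affine_hull)
qed

lemma avoid_negl:
  fixes U :: "'a::euclidean_space set"
  assumes "open U" "U \<noteq> {}" "negligible N"
  obtains p where "p \<in> U" "p \<notin> N"
proof -
  have "\<not> U \<subseteq> N"
    using assms open_not_negligible negligible_subset by blast
  then show ?thesis using that by blast
qed

lemma core:
  fixes E :: "nat \<Rightarrow> 'a::euclidean_space set" and l :: nat
  assumes polyh: "\<forall>i<l. polyhedral_set (E i)"
    and disj: "\<forall>i<l. \<forall>j<l. i \<noteq> j \<longrightarrow> interior (E i) \<inter> interior (E j) = {}"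
    and fac: "\<forall>r<l. \<forall>s<l. aff_dim (E r \<inter> E s) = int DIM('a) - 1 \<longrightarrow>
            (E r \<inter> E s) face_of (E r) \<and> (E r \<inter> E s) face_of (E s)"
    and cvP: "convex (\<Union>s<l. E s)"
    and ij: "i < l" "j < l"
    and uv: "u \<in> E i" "v \<in> E i" and w: "w \<in> E i" "w \<in> E j" "w \<in> open_segment u v"
  shows "u \<in> E j \<and> v \<in> E j"
proof (rule ccontr)
  assume nQj: "\<not> (u \<in> E j \<and> v \<in> E j)"
  define Q where "Q k \<longleftrightarrow> u \<in> E k \<and> v \<in> E k" for k
  have cl: "closed (E k)" and cv: "convex (E k)" and ne: "interior (E k) \<noteq> {}" if "k < l" for k
    using polyh that polyhedron_imp_closed polyhedron_imp_convex
    by (auto simp: polyhedral_set_def)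
  define U where "U = - (\<Union>k\<in>{k. k<l \<and> w \<notin> E k}. E k)"
  have "open U" unfolding U_def using cl by (intro open_Compl closed_UN) auto
  moreover have "w \<in> U" unfolding U_def by auto
  ultimately obtain r where r: "r > 0" "ball w r \<subseteq> U"
    using open_contains_ball by blast
  have near: "w \<in> E k" if "x \<in> ball w r" "k < l" "x \<in> E k" for x k
    using r that unfolding U_def by auto
  have Qi: "Q i" using uv by (simp add: Q_def)
  have nQj': "\<not> Q j" using nQj by (simp add: Q_def)
  have intball: "interior (E k) \<inter> ball w r \<noteq> {}" if "k < l" "w \<in> E k" for k
  proof -
    have "w \<in> closure (interior (E k))"
      using convex_closure_interior[OF cv ne] that closure_subset by blast
    moreover have "w \<in> ball w r" using r(1) by simp
    ultimately have "ball w r \<inter> closure (interior (E k)) \<noteq> {}" by blast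
    then show ?thesis using open_Int_closure_eq_empty[of "ball w r" "interior (E k)"] by auto
  qed
  define Bad where "Bad = {(a,b). a < l \<and> b < l \<and> a \<noteq> b \<and> aff_dim (E a \<inter> E b) < int DIM('a) - 1}"
  have fB: "finite Bad"
    by (rule finite_subset[of _ "{..<l} \<times> {..<l}"]) (auto simp: Bad_def)
  define N1 where "N1 = (\<Union>(a,b)\<in>Bad. affine hull (E a \<inter> E b))"
  have "negligible N1" unfolding N1_def
    using fB by (intro negligible_Union) (auto simp: Bad_def intro!: negl_lowdim_aff)
  then obtain p where p: "p \<in> interior (E i) \<inter> ball w r" "p \<notin> N1"
    using avoid_negl[of "interior (E i) \<inter> ball w r" N1] intball[OF ij(1) w(1)] by blast
  define N2 where "N2 = (\<Union>(a,b)\<in>Bad. affine hull (insert p (E a \<inter> E b)))"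
  have "negligible N2" unfolding N2_def
  proof (intro negligible_Union)
    show "finite ((\<lambda>(a,b). affine hull (insert p (E a \<inter> E b))) ` Bad)" using fB by auto
  next
    fix T assume "T \<in> (\<lambda>(a,b). affine hull (insert p (E a \<inter> E b))) ` Bad"
    then obtain a b where "(a,b) \<in> Bad" and T: "T = affine hull (insert p (E a \<inter> E b))" by auto
    then have "aff_dim (E a \<inter> E b) < int DIM('a) - 1" by (auto simp: Bad_def)
    then have "aff_dim (insert p (E a \<inter> E b)) < int DIM('a)"
      by (simp add: aff_dim_insert)
    then show "negligible T" using T negl_lowdim_aff by blast
  qed
  then obtain q where q: "q \<in> interior (E j) \<inter> ball w r" "q \<notin> N2"
    using avoid_negl[of "interior (E j) \<inter> ball w r" N2] intball[OF ij(2) w(2)] by blast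
  let ?S = "closed_segment p q"
  have segball: "?S \<subseteq> ball w r"
    using p q by (intro closed_segment_subset) auto
  have pE: "p \<in> E i" using p interior_subset by blast
  have qE: "q \<in> E j" using q interior_subset by blast
  have segP: "?S \<subseteq> (\<Union>s<l. E s)"
    using pE qE ij by (intro closed_segment_subset cvP) auto
  define A where "A = (\<Union>k\<in>{k. k<l \<and> w \<in> E k \<and> Q k}. E k)"
  define B where "B = (\<Union>k\<in>{k. k<l \<and> w \<in> E k \<and> \<not> Q k}. E k)"
  have clA: "closed A" unfolding A_def using cl by (intro closed_UN) auto
  have clB: "closed B" unfolding B_def using cl by (intro closed_UN) auto
  have "?S = (A \<inter> ?S) \<union> (B \<inter> ?S)"
  proof -
    have "x \<in> A \<or> x \<in> B" if "x \<in> ?S" for x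
    proof -
      have "x \<in> (\<Union>s<l. E s)" using segP that by (rule subsetD)
      then obtain k where k: "k < l" "x \<in> E k" by (auto simp only: UN_iff lessThan_iff)
      have "x \<in> ball w r" using segball that by (rule subsetD)
      then have wk: "w \<in> E k" using near k by blast
      show ?thesis
      proof (cases "Q k")
        case True
        then have "x \<in> A" unfolding A_def using k wk by (intro UN_I[of k]) simp_all
        then show ?thesis ..
      next
        case False
        then have "x \<in> B" unfolding B_def using k wk by (intro UN_I[of k]) simp_all
        then show ?thesis ..
      qed
    qed
    then show ?thesis by (intro equalityI subsetI) (auto simp only: Un_iff Int_iff)
  qed
  moreover have "p \<in> A \<inter> ?S"
  proof
    show "p \<in> A" unfolding A_def using pE ij(1) w(1) Qi by (intro UN_I[of i]) simp_all
  qed (rule ends_in_segment)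
  moreover have "q \<in> B \<inter> ?S"
  proof
    show "q \<in> B" unfolding B_def using qE ij(2) w(2) nQj' by (intro UN_I[of j]) simp_all
  qed (rule ends_in_segment)
  moreover have "closed (A \<inter> ?S)" using clA by (intro closed_Int) auto
  moreover have "closed (B \<inter> ?S)" using clB by (intro closed_Int) auto
  ultimately have "(A \<inter> ?S) \<inter> (B \<inter> ?S) \<noteq> {}"
    using connected_as_closed_union[of ?S "A \<inter> ?S" "B \<inter> ?S", OF connected_segment]
    by blast
  then obtain z k m where z: "z \<in> ?S" "z \<in> E k" "z \<in> E m" and km: "k < l" "m < l"
     "w \<in> E k" "w \<in> E m" "Q k" "\<not> Q m"
    unfolding A_def B_def by blast
  have kne: "k \<noteq> m" using km by auto
  have le: "aff_dim (E k \<inter> E m) \<le> int DIM('a)" by (rule aff_dim_le_DIM)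
  have neq: "aff_dim (E k \<inter> E m) \<noteq> int DIM('a)"
  proof
    assume "aff_dim (E k \<inter> E m) = int DIM('a)"
    then have "interior (E k \<inter> E m) = rel_interior (E k \<inter> E m)"
      using interior_rel_interior_gen[of "E k \<inter> E m"] by (simp only: simp_thms if_True)
    moreover have "convex (E k \<inter> E m)" using cv km by (intro convex_Int) auto
    moreover have "E k \<inter> E m \<noteq> {}" using z by blast
    ultimately have "interior (E k \<inter> E m) \<noteq> {}" using rel_interior_eq_empty by metis
    moreover have "interior (E k) \<inter> interior (E m) = {}" using disj km(1,2) kne by blast
    ultimately show False by simp
  qed
  have ge: "\<not> aff_dim (E k \<inter> E m) < int DIM('a) - 1"
  proof
    assume lt: "aff_dim (E k \<inter> E m) < int DIM('a) - 1"
    then have kmB: "(k,m) \<in> Bad" using km kne by (auto simp: Bad_def)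
    show False
    proof (cases "z = p")
      case True
      then have "p \<in> affine hull (E k \<inter> E m)" using z by (auto intro: hull_inc)
      then show False using p kmB unfolding N1_def by blast
    next
      case False
      obtain t where t: "0 \<le> t" "t \<le> 1" "z = (1 - t) *\<^sub>R p + t *\<^sub>R q"
        using z(1) unfolding closed_segment_def by auto
      have t0: "t \<noteq> 0" using t False by auto
      have e1: "(1/t) *\<^sub>R z = ((1/t) * (1 - t)) *\<^sub>R p + ((1/t) * t) *\<^sub>R q"
        using t(3) by (simp add: scaleR_add_right)
      have e2: "(1/t) * (1 - t) = 1/t - 1" "(1/t) * t = 1" using t0 by (simp_all add: field_simps)
      have "q = (1 - 1/t) *\<^sub>R p + (1/t) *\<^sub>R z"
        unfolding e1 e2 by (simp add: algebra_simps)
      then have "q \<in> affine hull {p, z}"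
        unfolding affine_hull_2 by force
      moreover have "affine hull {p, z} \<subseteq> affine hull (insert p (E k \<inter> E m))"
        using z by (intro hull_mono) auto
      ultimately show False using q kmB unfolding N2_def by blast
    qed
  qed
  have "aff_dim (E k \<inter> E m) = int DIM('a) - 1" using le neq ge by linarith
  then have "(E k \<inter> E m) face_of (E k)" using fac km by blast
  then have "u \<in> E k \<inter> E m \<and> v \<in> E k \<inter> E m"
    using face_ofD[of "E k \<inter> E m" "E k" w u v] km w Q_def by auto
  then show False using km Q_def by auto
qed

theorem lemmaS19:
  fixes E :: "nat \<Rightarrow> 'a::euclidean_space set" and l :: nat
  assumes "\<forall>i<l. polyhedral_set (E i)"
    and "\<forall>i<l. \<forall>j<l. i \<noteq> j \<longrightarrow> interior (E i) \<inter> interior (E j) = {}"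
    and "\<forall>r<l. \<forall>s<l. aff_dim (E r \<inter> E s) = int DIM('a) - 1 \<longrightarrow>
            (E r \<inter> E s) face_of (E r) \<and> (E r \<inter> E s) face_of (E s)"
    and "polyhedral_set (\<Union>s<l. E s)"
  shows "polyhedral_subdivision (\<Union>s<l. E s) l E"
proof -
  have cvP: "convex (\<Union>s<l. E s)"
    using assms(4) polyhedron_imp_convex by (auto simp: polyhedral_set_def)
  have cv: "convex (E k)" if "k < l" for k
    using assms(1) that polyhedron_imp_convex by (auto simp: polyhedral_set_def)
  have F: "(E i \<inter> E j) face_of (E i)" if "i < l" "j < l" for i j
  proof (cases "i = j")
    case True then show ?thesis using cv that by (simp add: face_of_refl)
  next
    case False
    show ?thesis unfolding face_of_def
    proof (intro conjI ballI impI)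
      show "convex (E i \<inter> E j)" by (intro convex_Int cv that)
    next
      fix a b x assume ab: "a \<in> E i" "b \<in> E i" "x \<in> E i \<inter> E j" "x \<in> open_segment a b"
      then have "a \<in> E j \<and> b \<in> E j"
        using core[OF assms(1-3) cvP that ab(1,2), of x] by auto
      then show "a \<in> E i \<inter> E j" "b \<in> E i \<inter> E j" using ab by auto
    qed auto
  qed
  have G: "\<forall>i<l. \<forall>j<l. (E i \<inter> E j) face_of (E i) \<and> (E i \<inter> E j) face_of (E j)"
  proof (intro allI impI conjI)
    fix i j assume ij: "i < l" "j < l"
    show "(E i \<inter> E j) face_of (E i)" using F[OF ij] .
    have "(E j \<inter> E i) face_of (E j)" using F[OF ij(2,1)] .
    then show "(E i \<inter> E j) face_of (E j)" by (simp only: Int_commute)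
  qed
  show ?thesis
    unfolding polyhedral_subdivision_def
    using assms(1,4) G by blast
qed

end
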